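(* For every integer $n\ge 0$ and every $\mathbf t\in\mathbb R^4_H$, $$D_n^H(\mathbf t)=\Theta_{n+1}(\mathbf t)-\Theta_n(\mathbf t),\qquad\text{where}\quad \Theta_n(\mathbf t):=\prod_{j=1}^4\frac{\sin \pi n t_j}{\sin \pi t_j}.$$
   Context: Let $\mathbb R^4_H=\{\mathbf t\in\mathbb R^4: t_1+t_2+t_3+t_4=0\}$ and $\mathbb Z^4_H=\mathbb Z^4\cap\mathbb R^4_H$. Let $\mathbb H=\{\mathbf k\in\mathbb Z^4_H: k_1\equiv k_2\equiv k_3\equiv k_4 \pmod 4\}$. For $n\ge 0$ let $\mathbb H_n^*=\{\mathbf k\in\mathbb H: -4n\le k_i-k_j\le 4n \text{ for all } 1\le i<j\le 4\}$, and define the Dirichlet kernel $D_n^H(\mathbf t)=\sum_{\mathbf k\in\mathbb H_n^*}e^{\frac{\pi i}{2}\mathbf k\cdot\mathbf t}$ for $\mathbf t\in\mathbb R^4_H$. The quotients $\frac{\sin\pi n t}{\sin \pi t}$ are understood as their continuous extensions at integer $t$. *)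

theory Defs
  imports "HOL-Analysis.Analysis"
begin

definition sin_quot :: "nat \<Rightarrow> real \<Rightarrow> real" where
  "sin_quot n t =
     (if sin (pi * t) \<noteq> 0 then sin (pi * real n * t) / sin (pi * t)
      else Lim (at t) (\<lambda>s. sin (pi * real n * s) / sin (pi * s)))"

definition Theta :: "nat \<Rightarrow> real^4 \<Rightarrow> real" where
  "Theta n t = (\<Prod>j\<in>UNIV. sin_quot n (t $ j))"

definition latH :: "(int^4) set" where
  "latH = {k. (\<Sum>j\<in>UNIV. k $ j) = 0 \<and> (\<forall>i j. k $ i mod 4 = k $ j mod 4)}"

definition latH_star :: "nat \<Rightarrow> (int^4) set" where
  "latH_star n = {k \<in> latH. \<forall>i j. - 4 * int n \<le> k $ i - k $ j \<and> k $ i - k $ j \<le> 4 * int n}"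

definition DH :: "nat \<Rightarrow> real^4 \<Rightarrow> complex" where
  "DH n t = (\<Sum>k\<in>latH_star n.
      cis (pi / 2 * (\<Sum>j\<in>UNIV. real_of_int (k $ j) * t $ j)))"

end

theory Submission
  imports Defs
begin


definition Mx :: "int^4 \<Rightarrow> int" where
  "Mx k = max (max (k$1) (k$2)) (max (k$3) (k$4))"

lemma Mx_ge: "k $ i \<le> Mx k"
  using exhaust_4[of i] by (auto simp: Mx_def)

lemma Mx_ex: "\<exists>i. k $ i = Mx k"
  unfolding Mx_def by (metis max_def)

lemma Mx_char: "(\<forall>i. k $ i \<le> m) \<Longrightarrow> k $ i0 = m \<Longrightarrow> Mx k = m"
  by (metis Mx_ex Mx_ge order_antisym)

definition PP :: "nat \<Rightarrow> int set" where
  "PP n = {l. \<bar>l\<bar> \<le> int n - 1 \<and> even (l + int n - 1)}"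

definition RR :: "nat \<Rightarrow> real \<Rightarrow> real" where
  "RR n x = (\<Sum>l\<in>PP n. cos (pi * of_int l * x))"

lemma PP_finite: "finite (PP n)"
  by (rule finite_subset[of _ "{-int n..int n}"]) (auto simp: PP_def)

lemma PP_0: "PP 0 = {}" by (auto simp: PP_def)
lemma PP_1: "PP (Suc 0) = {0}" by (auto simp: PP_def)
lemma PP_step: "PP (n+2) = insert (int n + 1) (insert (-(int n+1)) (PP n))"
  by (auto simp: PP_def) presburger+

lemma RR_mult: "sin (pi * x) * RR n x = sin (pi * real n * x)"
proof (induction n rule: nat_induct2)
  case 0 then show ?case by (simp add: RR_def PP_0)
next
  case 1 then show ?case by (simp add: RR_def PP_1)
next
  case (step n)
  have c: "cos (pi * of_int (-(int n+1)) * x) = cos (pi * (real n + 1) * x)"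
    using cos_minus[of "pi * (real n + 1) * x"] by (simp add: algebra_simps)
  have "RR (n+2) x = RR n x + 2 * cos (pi * (real n + 1) * x)"
    unfolding RR_def PP_step using PP_finite[of n] c
    by (simp add: PP_def algebra_simps)
  moreover have "sin (pi * x) * (2 * cos (pi * (real n + 1) * x)) =
     sin (pi * real (n+2) * x) - sin (pi * real n * x)"
  proof -
    have "sin (pi * real (n+2) * x) = sin (pi * (real n + 1) * x + pi * x)"
      by (simp add: algebra_simps)
    moreover have "sin (pi * real n * x) = sin (pi * (real n + 1) * x - pi * x)"
      by (simp add: algebra_simps)
    ultimately show ?thesis by (simp add: sin_add sin_diff)
  qed
  ultimately show ?case using step by (simp add: algebra_simps)
qed

lemma RR_cont: "isCont (RR n) x"
  unfolding RR_def by (intro continuous_intros)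

lemma sin_quot_RR: "sin_quot n x = RR n x"
proof (cases "sin (pi * x) = 0")
  case False
  then show ?thesis unfolding sin_quot_def using RR_mult[of x n]
    by (simp add: field_simps)
next
  case True
  then obtain m :: int where m: "x = of_int m"
    using sin_zero_iff_int2[of "pi * x"] by auto
  have ev0: "\<forall>s. s \<noteq> x \<and> dist s x < 1 \<longrightarrow> RR n s = sin (pi * real n * s) / sin (pi * s)"
  proof (intro allI impI)
    fix s assume s: "s \<noteq> x \<and> dist s x < 1"
    have "sin (pi * s) \<noteq> 0"
    proof
      assume "sin (pi * s) = 0"
      then obtain i :: int where "pi * s = of_int i * pi"
        using sin_zero_iff_int2[of "pi * s"] by auto
      then have si: "s = of_int i" by simp
      with s m have "\<bar>of_int i - of_int m\<bar> < (1::real)" "i \<noteq> m"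
        by (auto simp: dist_real_def)
      then show False by linarith
    qed
    then show "RR n s = sin (pi * real n * s) / sin (pi * s)"
      using RR_mult[of s n] by (simp add: field_simps)
  qed
  have ev: "eventually (\<lambda>s. RR n s = sin (pi * real n * s) / sin (pi * s)) (at x)"
    unfolding eventually_at using ev0 by (intro exI[of _ 1]) auto
  have "((\<lambda>s. sin (pi * real n * s) / sin (pi * s)) \<longlongrightarrow> RR n x) (at x)"
    using Lim_transform_eventually[OF RR_cont[unfolded isCont_def] ev] .
  then show ?thesis unfolding sin_quot_def using True
    by (simp add: tendsto_Lim)
qed

definition BB :: "nat \<Rightarrow> (int^4) set" where
  "BB n = {l. \<forall>j. l $ j \<in> PP n}"

definition TT :: "nat \<Rightarrow> (int^4) set" where
  "TT n = {l \<in> BB (n+1). \<exists>j. l $ j = int n}"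

definition psi :: "nat \<Rightarrow> int^4 \<Rightarrow> int^4" where
  "psi n k = (\<chi> j. (k $ j - Mx k) div 2 + int n)"

definition phi :: "int^4 \<Rightarrow> int^4" where
  "phi l = (\<chi> j. 2 * l $ j - (\<Sum>i\<in>UNIV. l $ i) div 2)"

lemma one_coord:
  fixes x M :: int
  assumes "x mod 4 = M mod 4" "M - 4 * int n \<le> x" "x \<le> M"
  shows "\<bar>(x - M) div 2 + int n\<bar> \<le> int n" "even ((x - M) div 2 + int n + int n)"
    "2 * ((x - M) div 2 + int n) = x - M + 2 * int n"
  using assms by presburger+

lemma psi_in: assumes k: "k \<in> latH_star n" shows "psi n k \<in> TT n"
proof -
  obtain i where i: "k $ i = Mx k" using Mx_ex by blast
  have k1: "k$a mod 4 = k$b mod 4" and k2: "k$a - k$b \<le> 4*int n" for a b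
    using k unfolding latH_star_def latH_def by auto
  have s: "k $ j mod 4 = Mx k mod 4" "Mx k - 4 * int n \<le> k $ j" "k $ j \<le> Mx k" for j
    using k1[of j i] k2[of i j] i Mx_ge[of k j] by auto
  have "psi n k $ j \<in> PP (n+1)" for j
    using one_coord[OF s[of j]] unfolding psi_def PP_def by (simp add: algebra_simps)
  moreover have "psi n k $ i = int n" unfolding psi_def using i by simp
  ultimately show ?thesis unfolding TT_def BB_def by auto
qed

lemma TT_facts: assumes l: "l \<in> TT n"
  shows "\<And>j. \<bar>l$j\<bar> \<le> int n" "\<And>j. even (l$j + int n)" "\<exists>i. l$i = int n"
    "even (\<Sum>i\<in>UNIV. l $ i)"
proof -
  show a: "\<bar>l$j\<bar> \<le> int n" "even (l$j + int n)" for j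
    using l unfolding TT_def BB_def PP_def by auto
  show "\<exists>i. l$i = int n" using l unfolding TT_def by auto
  have "even (l$1 + l$2 + l$3 + l$4)"
  proof -
    have e: "even ((l$1 + int n) + (l$2 + int n) + ((l$3 + int n) + (l$4 + int n)))"
      using a(2)[of 1] a(2)[of 2] a(2)[of 3] a(2)[of 4] by simp
    have "l$1 + l$2 + l$3 + l$4 = ((l$1 + int n) + (l$2 + int n) + ((l$3 + int n) + (l$4 + int n))) - 2 * (2 * int n)"
      by simp
    then show ?thesis using e by (metis dvd_diff dvd_triv_left)
  qed
  then show "even (\<Sum>i\<in>UNIV. l $ i)" by (simp add: sum_4)
qed

lemma phi_in: assumes l: "l \<in> TT n" shows "phi l \<in> latH_star n"
proof -
  note f = TT_facts[OF l]
  define s where "s = (\<Sum>i\<in>UNIV. l $ i)"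
  have ph: "phi l $ j = 2 * l$j - s div 2" for j unfolding phi_def s_def by simp
  have "(\<Sum>j\<in>UNIV. phi l $ j) = 2 * s - 4 * (s div 2)"
    unfolding ph by (simp add: sum_4 s_def algebra_simps)
  also have "\<dots> = 0" using f(4) unfolding s_def[symmetric] by (elim evenE) simp
  finally have 1: "(\<Sum>j\<in>UNIV. phi l $ j) = 0" .
  have 2: "phi l $ a mod 4 = phi l $ b mod 4" for a b
  proof -
    obtain m where "(l$a + int n) - (l$b + int n) = 2 * m"
      using dvd_diff[OF f(2)[of a] f(2)[of b]] by (rule dvdE)
    then have m: "l$a - l$b = 2 * m" by simp
    have e: "2 * l$a - s div 2 = (2 * l$b - s div 2) + m * 4" using m by simp
    show ?thesis unfolding ph e by (rule mod_mult_self1)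
  qed
  have 3: "- 4 * int n \<le> phi l $ a - phi l $ b \<and> phi l $ a - phi l $ b \<le> 4 * int n" for a b
    using f(1)[of a] f(1)[of b] unfolding ph by auto
  show ?thesis unfolding latH_star_def latH_def using 1 2 3 by auto
qed

lemma psi_phi: assumes l: "l \<in> TT n" shows "psi n (phi l) = l"
proof -
  note f = TT_facts[OF l]
  define s where "s = (\<Sum>i\<in>UNIV. l $ i)"
  have ph: "phi l $ j = 2 * l$j - s div 2" for j unfolding phi_def s_def by simp
  obtain i where i: "l $ i = int n" using f(3) by blast
  have M: "Mx (phi l) = 2 * int n - s div 2"
    by (rule Mx_char[of _ _ i]) (use f(1) i abs_le_D1 in \<open>auto simp: ph\<close>)
  show ?thesis unfolding psi_def M by (simp add: vec_eq_iff ph)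
qed

lemma phi_psi: assumes k: "k \<in> latH_star n" shows "phi (psi n k) = k"
proof -
  obtain i where i: "k $ i = Mx k" using Mx_ex by blast
  have k1: "k$a mod 4 = k$b mod 4" and k2: "k$a - k$b \<le> 4*int n" for a b
    using k unfolding latH_star_def latH_def by auto
  have k0: "(\<Sum>j\<in>UNIV. k $ j) = 0" using k unfolding latH_star_def latH_def by auto
  have s: "k $ j mod 4 = Mx k mod 4" "Mx k - 4 * int n \<le> k $ j" "k $ j \<le> Mx k" for j
    using k1[of j i] k2[of i j] i Mx_ge[of k j] by auto
  have p2: "2 * psi n k $ j = k $ j - Mx k + 2 * int n" for j
    using one_coord(3)[OF s[of j]] unfolding psi_def by simp
  have "2 * (\<Sum>j\<in>UNIV. psi n k $ j) = (\<Sum>j\<in>UNIV. 2 * psi n k $ j)"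
    by (simp add: sum_distrib_left)
  also have "\<dots> = (\<Sum>j\<in>UNIV. k $ j) - 4 * Mx k + 8 * int n"
    unfolding p2 by (simp add: sum_4 algebra_simps)
  finally have "(\<Sum>j\<in>UNIV. psi n k $ j) = 2 * (2 * int n - Mx k)" using k0 by simp
  then have "(\<Sum>j\<in>UNIV. psi n k $ j) div 2 = 2 * int n - Mx k" by simp
  then show ?thesis unfolding phi_def by (simp add: vec_eq_iff p2)
qed

lemma bij_psi: "bij_betw (psi n) (latH_star n) (TT n)"
  by (rule bij_betwI[of _ _ _ phi]) (auto simp: psi_in phi_in psi_phi phi_psi)


definition shift :: "int^4 \<Rightarrow> int^4" where
  "shift l = (\<chi> j. l $ j - 1)"

definition dbl :: "int^4 \<Rightarrow> int^4" where
  "dbl l = (\<chi> j. 2 * l $ j)"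

definition ee :: "real^4 \<Rightarrow> int^4 \<Rightarrow> complex" where
  "ee t v = cis (pi / 2 * (\<Sum>j\<in>UNIV. real_of_int (v $ j) * t $ j))"

lemma ee_shift:
  assumes "(\<Sum>j\<in>UNIV. t $ j) = 0"
  shows "ee t (\<chi> j. v $ j + c) = ee t v"
proof -
  have "(\<Sum>j\<in>UNIV. real_of_int ((\<chi> j. v $ j + c) $ j) * t $ j)
      = (\<Sum>j\<in>UNIV. real_of_int (v $ j) * t $ j) + real_of_int c * (\<Sum>j\<in>UNIV. t $ j)"
    by (simp add: algebra_simps sum.distrib sum_distrib_left)
  then show ?thesis unfolding ee_def using assms by simp
qed

lemma BB_finite: "finite (BB n)"
proof -
  have "bij_betw vec_nth (BB n) (PiE UNIV (\<lambda>_. PP n))"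
    by (rule bij_betwI[of _ _ _ vec_lambda]) (auto simp: BB_def PiE_iff)
  then show ?thesis using bij_betw_finite finite_PiE PP_finite by (metis finite)
qed

lemma BB_split: "BB (n+1) = shift ` BB n \<union> TT n" "shift ` BB n \<inter> TT n = {}" "inj_on shift (BB n)"
proof -
  show "inj_on shift (BB n)" by (auto simp: inj_on_def shift_def vec_eq_iff)
  have 1: "shift ` BB n \<subseteq> BB (n+1)"
  proof
    fix x assume "x \<in> shift ` BB n"
    then obtain l where l: "l \<in> BB n" "x = shift l" by auto
    have "l $ j - 1 \<in> PP (n+1)" for j
    proof -
      have "\<bar>l$j\<bar> \<le> int n - 1" "even (l$j + int n - 1)" using l(1) by (auto simp: BB_def PP_def)
      then show ?thesis unfolding PP_def by (simp; presburger)
    qed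
    then show "x \<in> BB (n+1)" using l by (auto simp: BB_def shift_def)
  qed
  have 2: "BB (n+1) \<subseteq> shift ` BB n \<union> TT n"
  proof
    fix l assume l: "l \<in> BB (n+1)"
    show "l \<in> shift ` BB n \<union> TT n"
    proof (cases "\<exists>j. l $ j = int n")
      case True then show ?thesis using l by (auto simp: TT_def)
    next
      case False
      have "l $ j + 1 \<in> PP n" for j
      proof -
        have "\<bar>l$j\<bar> \<le> int n" "even (l$j + int n)" "l $ j \<noteq> int n"
          using l False by (auto simp: BB_def PP_def)
        then show ?thesis unfolding PP_def by (simp; presburger)
      qed
      then have "(\<chi> j. l $ j + 1) \<in> BB n" by (auto simp: BB_def)
      moreover have "l = shift (\<chi> j. l $ j + 1)" by (simp add: shift_def vec_eq_iff)
      ultimately show ?thesis by blast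
    qed
  qed
  show "BB (n+1) = shift ` BB n \<union> TT n" using 1 2 by (auto simp: TT_def)
  show "shift ` BB n \<inter> TT n = {}"
  proof (rule ccontr)
    assume "shift ` BB n \<inter> TT n \<noteq> {}"
    then obtain l j where l: "l \<in> BB n" "shift l $ j = int n" by (auto simp: TT_def)
    then have "\<bar>l$j\<bar> \<le> int n - 1" by (auto simp: BB_def PP_def)
    then show False using l(2) by (simp add: shift_def)
  qed
qed

lemma sin_sum0: "(\<Sum>l\<in>PP n. sin (pi * of_int l * y)) = 0"
proof -
  have inj: "inj_on uminus (PP n)" by (auto simp: inj_on_def)
  have im: "uminus ` PP n = PP n"
  proof -
    have "x \<in> PP n \<Longrightarrow> - x \<in> PP n" for x unfolding PP_def by (simp; presburger)
    then show ?thesis by (metis (no_types, lifting) equalityI image_subsetI minus_minus rev_image_eqI subsetI)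
  qed
  have "(\<Sum>l\<in>PP n. sin (pi * of_int l * y)) = (\<Sum>l\<in>uminus ` PP n. sin (pi * of_int l * y))"
    using im by simp
  also have "\<dots> = (\<Sum>l\<in>PP n. sin (pi * of_int (-l) * y))"
    by (rule sum.reindex[OF inj, unfolded comp_def])
  also have "\<dots> = - (\<Sum>l\<in>PP n. sin (pi * of_int l * y))"
    by (simp add: sum_negf[symmetric])
  finally show ?thesis by simp
qed

lemma RR_cis: "complex_of_real (RR n y) = (\<Sum>l\<in>PP n. cis (pi * of_int l * y))"
  by (simp add: complex_eq_iff Re_sum Im_sum RR_def sin_sum0)

lemma Theta_sum: "complex_of_real (Theta n t) = (\<Sum>l\<in>BB n. ee t (dbl l))"
proof -
  have "complex_of_real (Theta n t) = (\<Prod>j\<in>UNIV. \<Sum>l\<in>PP n. cis (pi * of_int l * t $ j))"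
    unfolding Theta_def of_real_prod sin_quot_RR RR_cis ..
  also have "\<dots> = (\<Sum>g\<in>PiE UNIV (\<lambda>_. PP n). \<Prod>j\<in>UNIV. cis (pi * of_int (g j) * t $ j))"
    by (rule prod_sum_PiE) (auto simp: PP_finite)
  also have "\<dots> = (\<Sum>l\<in>BB n. \<Prod>j\<in>UNIV. cis (pi * of_int (l $ j) * t $ j))"
  proof -
    have "bij_betw vec_nth (BB n) (PiE UNIV (\<lambda>_. PP n))"
      by (rule bij_betwI[of _ _ _ vec_lambda]) (auto simp: BB_def PiE_iff)
    from sum.reindex_bij_betw[OF this, of "\<lambda>g. \<Prod>j\<in>UNIV. cis (pi * of_int (g j) * t $ j)"]
    show ?thesis by simp
  qed
  also have "\<dots> = (\<Sum>l\<in>BB n. ee t (dbl l))"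
  proof (rule sum.cong[OF refl])
    fix l
    have "(\<Prod>j\<in>UNIV. cis (pi * of_int (l $ j) * t $ j))
        = exp (\<Sum>j\<in>UNIV. \<i> * complex_of_real (pi * of_int (l $ j) * t $ j))"
      by (simp add: cis_conv_exp exp_sum)
    also have "\<dots> = ee t (dbl l)"
    proof -
      have a: "pi / 2 * (\<Sum>j\<in>UNIV. real_of_int ((\<chi> j. 2 * l $ j) $ j) * t $ j)
          = (\<Sum>j\<in>UNIV. pi * of_int (l $ j) * t $ j)"
        by (simp add: sum_distrib_left algebra_simps)
      have b: "\<i> * complex_of_real (\<Sum>j\<in>UNIV. pi * of_int (l $ j) * t $ j)
          = (\<Sum>j\<in>UNIV. \<i> * complex_of_real (pi * of_int (l $ j) * t $ j))"
        by (simp add: sum_distrib_left)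
      show ?thesis unfolding ee_def dbl_def cis_conv_exp a b ..
    qed
    finally show "(\<Prod>j\<in>UNIV. cis (pi * of_int (l $ j) * t $ j)) = ee t (dbl l)" .
  qed
  finally show ?thesis .
qed

theorem theorem3p10:
  fixes n :: nat and t :: "real^4"
  assumes "(\<Sum>j\<in>UNIV. t $ j) = 0"
  shows "DH n t = complex_of_real (Theta (n + 1) t - Theta n t)"
proof -
  have A: "complex_of_real (Theta (n+1) t) = complex_of_real (Theta n t) + (\<Sum>l\<in>TT n. ee t (dbl l))"
  proof -
    have "complex_of_real (Theta (n+1) t) = (\<Sum>l\<in>shift ` BB n \<union> TT n. ee t (dbl l))"
      unfolding Theta_sum BB_split(1) ..
    also have "\<dots> = (\<Sum>l\<in>shift ` BB n. ee t (dbl l)) + (\<Sum>l\<in>TT n. ee t (dbl l))"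
      by (rule sum.union_disjoint) (use BB_finite BB_split in \<open>auto simp: TT_def\<close>)
    also have "(\<Sum>l\<in>shift ` BB n. ee t (dbl l)) = (\<Sum>l\<in>BB n. ee t (dbl (shift l)))"
      using sum.reindex[OF BB_split(3)] by (simp add: comp_def)
    also have "\<dots> = (\<Sum>l\<in>BB n. ee t (dbl l))"
    proof (rule sum.cong[OF refl])
      fix l
      have e: "dbl (shift l) = (\<chi> j. dbl l $ j + (-2))" by (simp add: dbl_def shift_def vec_eq_iff algebra_simps)
      show "ee t (dbl (shift l)) = ee t (dbl l)" unfolding e by (rule ee_shift[OF assms])
    qed
    finally show ?thesis unfolding Theta_sum by simp
  qed
  have "DH n t = (\<Sum>k\<in>latH_star n. ee t k)" unfolding DH_def ee_def ..
  also have "\<dots> = (\<Sum>k\<in>latH_star n. ee t (dbl (psi n k)))"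
  proof (rule sum.cong[OF refl])
    fix k assume k: "k \<in> latH_star n"
    obtain i where i: "k $ i = Mx k" using Mx_ex by blast
    have k1: "k$a mod 4 = k$b mod 4" and k2: "k$a - k$b \<le> 4*int n" for a b
      using k unfolding latH_star_def latH_def by auto
    have s: "k $ j mod 4 = Mx k mod 4" "Mx k - 4 * int n \<le> k $ j" "k $ j \<le> Mx k" for j
      using k1[of j i] k2[of i j] i Mx_ge[of k j] by auto
    have e: "dbl (psi n k) = (\<chi> j. k $ j + (2 * int n - Mx k))"
      using one_coord(3)[OF s] by (simp add: dbl_def psi_def vec_eq_iff algebra_simps)
    show "ee t k = ee t (dbl (psi n k))" unfolding e by (rule ee_shift[OF assms, symmetric])
  qed
  also have "\<dots> = (\<Sum>l\<in>TT n. ee t (dbl l))"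
    using sum.reindex_bij_betw[OF bij_psi, of "\<lambda>l. ee t (dbl l)"] .
  finally show ?thesis using A by simp
qed

end
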